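(* Let $p$ be a prime, $n \ge 2$, and $G$ a group of order $p^n$ and exponent $p$. Then $\eta(G) \ge n + p - 1$.
   Context: A cyclic subgroup $C$ of a group $G$ is maximal cyclic if there is no cyclic subgroup $D$ of $G$ with $C < D$. $\eta(G)$ denotes the number of conjugacy classes of maximal cyclic subgroups of $G$. *)

theory Defs
  imports "HOL-Algebra.Algebra"
begin

definition cyclic_subgroup :: "('a, 'b) monoid_scheme \<Rightarrow> 'a set \<Rightarrow> bool" where
  "cyclic_subgroup G C \<longleftrightarrow> (\<exists>g \<in> carrier G. C = generate G {g})"

definition maximal_cyclic_subgroup :: "('a, 'b) monoid_scheme \<Rightarrow> 'a set \<Rightarrow> bool" where
  "maximal_cyclic_subgroup G C \<longleftrightarrow>
     cyclic_subgroup G C \<and> \<not> (\<exists>D. cyclic_subgroup G D \<and> C \<subset> D)"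

definition subgroup_conj_class :: "('a, 'b) monoid_scheme \<Rightarrow> 'a set \<Rightarrow> 'a set set" where
  "subgroup_conj_class G H = {(g <#\<^bsub>G\<^esub> H) #>\<^bsub>G\<^esub> inv\<^bsub>G\<^esub> g | g. g \<in> carrier G}"

definition eta :: "('a, 'b) monoid_scheme \<Rightarrow> nat" where
  "eta G = card (subgroup_conj_class G ` {C. maximal_cyclic_subgroup G C})"

end

theory Submission
  imports Defs
begin


fun dsum :: "nat \<Rightarrow> nat \<Rightarrow> nat \<Rightarrow> nat" where
  "dsum p 0 y = y"
| "dsum p (Suc m) y = y mod p + dsum p m (y div p)"

lemma dsum_Suc1: "p \<ge> 2 \<Longrightarrow> dsum p m (y+1) \<le> dsum p m y + 1"
proof (induction m arbitrary: y)
  case 0 then show ?case by simp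
next
  case (Suc m)
  define q where "q = y div p"
  define r where "r = y mod p"
  have y: "y = q * p + r" unfolding q_def r_def by simp
  have rp: "r < p" unfolding r_def using Suc.prems by simp
  show ?case
  proof (cases "r + 1 < p")
    case True
    have y1: "y + 1 = (r+1) + q * p" using y by simp
    have d: "((r+1) + q * p) div p = q + (r+1) div p" using Suc.prems by (intro div_mult_self1) simp
    have "(y+1) mod p = r + 1" "(y+1) div p = q" 
      using True Suc.prems d unfolding y1 by simp_all
    then show ?thesis by (simp add: q_def r_def)
  next
    case False
    then have r: "r = p - 1" using rp by simp
    have y1: "y + 1 = (q+1) * p" using y r Suc.prems by (simp add: algebra_simps)
    have "(y+1) mod p = 0" "(y+1) div p = q + 1" 
      using Suc.prems unfolding y1 by simp_all
    then show ?thesis using Suc.IH[of q] Suc.prems r by (simp add: q_def r_def)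
  qed
qed

lemma dsum_add: "p \<ge> 2 \<Longrightarrow> dsum p m (y+t) \<le> dsum p m y + t"
proof (induction t)
  case 0 then show ?case by simp
next
  case (Suc t)
  have "dsum p m (y + Suc t) = dsum p m ((y+t)+1)" by simp
  also have "\<dots> \<le> dsum p m (y+t) + 1" using dsum_Suc1 Suc.prems by blast
  finally show ?case using Suc by simp
qed

lemma dsum_add': "p \<ge> 2 \<Longrightarrow> dsum p m (t+y) \<le> dsum p m y + t"
proof -
  assume "p \<ge> 2"
  then have "dsum p m (y+t) \<le> dsum p m y + t" by (rule dsum_add)
  moreover have "y + t = t + y" by simp
  ultimately show ?thesis by simp
qed

lemma dsum_count:
  assumes "p \<ge> 2"
  shows "finite I \<Longrightarrow> \<forall>i\<in>I. \<exists>e\<le>m. f i = p^e \<Longrightarrow> dsum p m (sum f I) \<le> card I"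
proof (induction m arbitrary: I f)
  case 0
  then have "sum f I = card I" by simp
  then show ?case by simp
next
  case (Suc m)
  define I0 where "I0 = {i\<in>I. f i = 1}"
  define I1 where "I1 = I - I0"
  define f' where "f' = (\<lambda>i. f i div p)"
  have fin: "finite I0" "finite I1" using Suc.prems unfolding I0_def I1_def by auto
  have disj: "I0 \<inter> I1 = {}" "I = I0 \<union> I1" unfolding I1_def I0_def by auto
  have f1: "\<forall>i\<in>I1. \<exists>e\<le>m. f' i = p^e \<and> f i = p * f' i"
  proof
    fix i assume i: "i \<in> I1"
    then obtain e where e: "e \<le> Suc m" "f i = p^e" using Suc.prems unfolding I1_def by auto
    have "e \<noteq> 0" using i e unfolding I1_def I0_def by auto
    then obtain e' where "e = Suc e'" using not0_implies_Suc by blast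
    then show "\<exists>e\<le>m. f' i = p^e \<and> f i = p * f' i" using e assms unfolding f'_def
      by (intro exI[of _ e']) auto
  qed
  have IH: "dsum p m (sum f' I1) \<le> card I1"
    using Suc.IH[of I1 f'] fin f1 by blast
  have s0: "sum f I0 = card I0" unfolding I0_def by simp
  have "sum f I1 = (\<Sum>i\<in>I1. p * f' i)" by (rule sum.cong) (use f1 in auto)
  then have s1: "sum f I1 = p * sum f' I1" by (simp add: sum_distrib_left)
  have "sum f I = sum f I0 + sum f I1" by (subst disj(2)) (rule sum.union_disjoint[OF fin disj(1)])
  then have S: "sum f I = card I0 + p * sum f' I1" using s0 s1 by simp
  have cI: "card I = card I0 + card I1" using card_Un_disjoint[OF fin disj(1)] disj(2) by simp
  have "dsum p (Suc m) (sum f I) = card I0 mod p + dsum p m (card I0 div p + sum f' I1)"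
    using assms by (simp add: S ac_simps)
  also have "\<dots> \<le> card I0 mod p + dsum p m (sum f' I1) + card I0 div p"
    using dsum_add'[OF assms, of m "card I0 div p" "sum f' I1"] by linarith
  also have "\<dots> \<le> card I0 mod p + card I0 div p + card I1" using IH by simp
  also have "card I0 mod p + card I0 div p \<le> card I0"
  proof -
    have "card I0 = card I0 div p * p + card I0 mod p" by simp
    moreover have "card I0 div p \<le> card I0 div p * p" using assms by simp
    ultimately show ?thesis by linarith
  qed
  finally show ?case using cI by simp
qed

lemma geom_shift: "(\<Sum>i<Suc k. p^i) = 1 + p * (\<Sum>i<k. (p::nat)^i)"
proof (induction k)
  case 0 then show ?case by simp
next
  case (Suc k)
  have "(\<Sum>i<Suc (Suc k). p^i) = (\<Sum>i<Suc k. p^i) + p^Suc k" by simp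
  also have "\<dots> = 1 + p * (\<Sum>i<k. p^i) + p * p^k" using Suc.IH by simp
  also have "\<dots> = 1 + p * (\<Sum>i<Suc k. p^i)" by (simp add: algebra_simps)
  finally show ?case .
qed

lemma dsum_geom: "p \<ge> 2 \<Longrightarrow> dsum p m (\<Sum>i<m+2. p^i) = m + p + 1"
proof (induction m)
  case 0
  then show ?case by simp
next
  case (Suc m)
  define Y0 where "Y0 = (\<Sum>i<m+2. p^i)"
  have e: "(\<Sum>i<Suc m+2. p^i) = 1 + p * Y0"
    using geom_shift[where k="m+2" and p=p] unfolding Y0_def by simp
  have "(1 + Y0 * p) mod p = 1 mod p" by (rule mod_mult_self1)
  then have a: "(1 + p * Y0) mod p = 1" using Suc.prems by (simp add: mult.commute)
  have "(1 + Y0 * p) div p = Y0 + 1 div p" using Suc.prems by (intro div_mult_self1) simp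
  then have b: "(1 + p * Y0) div p = Y0" using Suc.prems by (simp add: mult.commute)
  have "dsum p (Suc m) (1 + p * Y0) = (1 + p * Y0) mod p + dsum p m ((1 + p * Y0) div p)"
    by (simp only: dsum.simps)
  then show ?case using Suc a b e unfolding Y0_def by simp
qed

lemma geom: "(p - 1) * (\<Sum>i<n. p^i) = p^n - (1::nat)"
proof (induction n)
  case 0 then show ?case by simp
next
  case (Suc n)
  have "(p - 1) * (\<Sum>i<Suc n. p^i) = (p^n - 1) + (p-1)*p^n" using Suc by (simp add: algebra_simps)
  also have "\<dots> = p^Suc n - 1"
  proof (cases "p = 0")
    case False
    then have a: "p^n \<ge> 1" by simp
    have b: "p*p^n \<ge> p^n" using False by simp
    have "(p-1)*p^n = p*p^n - p^n" by (simp add: diff_mult_distrib)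
    then show ?thesis using a b by simp
  qed (cases n, auto)
  finally show ?case .
qed



context group begin

lemma ord_p:
  assumes p: "Factorial_Ring.prime (p::nat)" and ex: "\<forall>x\<in>carrier G. x [^] p = \<one>"
    and x: "x \<in> carrier G" "x \<noteq> \<one>"
  shows "ord x = p"
proof -
  have "ord x dvd p" using pow_eq_id[OF x(1)] ex x by blast
  moreover have "ord x \<noteq> 1" using ord_eq_1[OF x(1)] x by simp
  moreover have "\<forall>m. m dvd p \<longrightarrow> m = 1 \<or> m = p" using p unfolding prime_nat_iff by blast
  ultimately show ?thesis by blast
qed

lemma card_gen_p:
  assumes p: "Factorial_Ring.prime (p::nat)" and ex: "\<forall>x\<in>carrier G. x [^] p = \<one>"
    and x: "x \<in> carrier G" "x \<noteq> \<one>"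
  shows "card (generate G {x}) = p"
  using generate_pow_card[OF x(1)] ord_p[OF assms] by simp

lemma card_gen_le:
  assumes p: "Factorial_Ring.prime (p::nat)" and ex: "\<forall>x\<in>carrier G. x [^] p = \<one>"
    and x: "x \<in> carrier G"
  shows "card (generate G {x}) \<le> p"
proof (cases "x = \<one>")
  case True
  then show ?thesis using generate_one prime_gt_0_nat[OF p] by simp
next
  case False
  then show ?thesis using card_gen_p[OF p ex x] by simp
qed

lemma gen_eq:
  assumes fin: "finite (carrier G)" and p: "Factorial_Ring.prime (p::nat)" and ex: "\<forall>x\<in>carrier G. x [^] p = \<one>"
    and H: "subgroup H G" "card H = p" and x: "x \<in> H" "x \<noteq> \<one>"
  shows "generate G {x} = H"
proof -
  have xc: "x \<in> carrier G" using subgroup.mem_carrier[OF H(1) x(1)] .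
  have sub: "generate G {x} \<subseteq> H" using generate_subgroup_incl[OF _ H(1), of "{x}"] x(1) by simp
  have finH: "finite H" using finite_subset[OF subgroup.subset[OF H(1)] fin] .
  have cg: "card (generate G {x}) = card H" using card_gen_p[OF p ex xc x(2)] H(2) by simp
  show ?thesis using card_subset_eq[OF finH sub cg] .
qed

lemma maxcyc_iff:
  assumes fin: "finite (carrier G)" and p: "Factorial_Ring.prime (p::nat)" and ex: "\<forall>x\<in>carrier G. x [^] p = \<one>"
    and nt: "\<exists>x\<in>carrier G. x \<noteq> \<one>"
  shows "maximal_cyclic_subgroup G C \<longleftrightarrow> subgroup C G \<and> card C = p"
proof
  assume m: "maximal_cyclic_subgroup G C"
  then obtain g where g: "g \<in> carrier G" "C = generate G {g}"
    unfolding maximal_cyclic_subgroup_def cyclic_subgroup_def by blast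
  obtain x where x: "x \<in> carrier G" "x \<noteq> \<one>" using nt by blast
  have "g \<noteq> \<one>"
  proof
    assume "g = \<one>"
    then have "C = {\<one>}" using g generate_one by simp
    moreover have "cyclic_subgroup G (generate G {x})" using x unfolding cyclic_subgroup_def by blast
    moreover have "{\<one>} \<subset> generate G {x}"
    proof -
      have "x \<in> generate G {x}" using generate.incl[of x "{x}" G] by simp
      moreover have "\<one> \<in> generate G {x}" by (rule generate.one)
      ultimately show ?thesis using x(2) by blast
    qed
    ultimately show False using m unfolding maximal_cyclic_subgroup_def by blast
  qed
  then show "subgroup C G \<and> card C = p"
    using g card_gen_p[OF p ex g(1)] generate_is_subgroup[of "{g}"] by simp
next
  assume C: "subgroup C G \<and> card C = p"
  have "card C > 1" using conjunct2[OF C] prime_gt_1_nat[OF p] by simp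
  have "\<exists>x\<in>C. x \<noteq> \<one>"
  proof (rule ccontr)
    assume "\<not> (\<exists>x\<in>C. x \<noteq> \<one>)"
    then have "C \<subseteq> {\<one>}" by blast
    then have "card C \<le> 1" using card_mono[of "{\<one>}" C] by simp
    then show False using \<open>card C > 1\<close> by simp
  qed
  then obtain x where x: "x \<in> C" "x \<noteq> \<one>" by blast
  have xc: "x \<in> carrier G" using subgroup.mem_carrier[OF conjunct1[OF C] x(1)] .
  have Cg: "C = generate G {x}" using gen_eq[OF fin p ex conjunct1[OF C] conjunct2[OF C] x] by simp
  have "\<not> (\<exists>D. cyclic_subgroup G D \<and> C \<subset> D)"
  proof
    assume "\<exists>D. cyclic_subgroup G D \<and> C \<subset> D"
    then obtain y D where y: "y \<in> carrier G" "D = generate G {y}" "C \<subset> D"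
      unfolding cyclic_subgroup_def by blast
    have "D \<subseteq> carrier G" using y(1,2) generate_in_carrier[of "{y}"] by auto
    then have "finite D" using finite_subset fin by blast
    then have "card C < card D" using psubset_card_mono[OF _ y(3)] by simp
    moreover have "card D \<le> p" using card_gen_le[OF p ex y(1)] y by simp
    ultimately show False using C by simp
  qed
  then show "maximal_cyclic_subgroup G C"
    unfolding maximal_cyclic_subgroup_def cyclic_subgroup_def using Cg xc by blast
qed

lemma conj_image:
  assumes "g \<in> carrier G" "H \<subseteq> carrier G"
  shows "(g <# H) #> inv g = (\<lambda>h. g \<otimes> h \<otimes> inv g) ` H"
    and "g <# (H #> inv g) = (\<lambda>h. g \<otimes> h \<otimes> inv g) ` H"
proof -
  show "(g <# H) #> inv g = (\<lambda>h. g \<otimes> h \<otimes> inv g) ` H"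
    unfolding l_coset_def r_coset_def using assms by auto
  have e: "\<And>h. h \<in> H \<Longrightarrow> g \<otimes> (h \<otimes> inv g) = g \<otimes> h \<otimes> inv g"
    using assms by (auto simp: m_assoc)
  show "g <# (H #> inv g) = (\<lambda>h. g \<otimes> h \<otimes> inv g) ` H"
    unfolding l_coset_def r_coset_def using e by auto
qed

lemma conj_card:
  assumes "g \<in> carrier G" "H \<subseteq> carrier G"
  shows "card ((g <# H) #> inv g) = card H"
proof -
  have "inj_on (\<lambda>h. g \<otimes> h \<otimes> inv g) H"
    using assms conjugation_is_inj unfolding inj_on_def by blast
  then show ?thesis using conj_image(1)[OF assms] card_image by simp
qed

lemma comm_conj:
  assumes "g \<in> carrier G" "x \<in> carrier G" "g \<otimes> x \<otimes> inv g = x"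
  shows "g \<otimes> x = x \<otimes> g"
proof -
  have e: "(g \<otimes> x \<otimes> inv g) \<otimes> g = g \<otimes> x" using assms(1,2) by (simp add: m_assoc)
  have "x \<otimes> g = g \<otimes> x" using e unfolding assms(3) .
  then show ?thesis by simp
qed

lemma conj_action:
  "group_action G {H. subgroup H G} (\<lambda>g. \<lambda>H\<in>{H. subgroup H G}. (g <# H) #> inv g)"
  by (rule action_by_conjugation_on_subgroups_set)

lemma primepow_dvd:
  assumes "Factorial_Ring.prime (p::nat)" "d dvd p^n"
  shows "\<exists>i. d = p^i"
  using divides_primepow_nat[OF assms(1)] assms(2) by blast

lemma center_nontriv:
  assumes fin: "finite (carrier G)" and p: "Factorial_Ring.prime (p::nat)"
    and card: "card (carrier G) = p^n" and n: "n \<ge> 1"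
  shows "\<exists>z\<in>carrier G. z \<noteq> \<one> \<and> (\<forall>g\<in>carrier G. g \<otimes> z = z \<otimes> g)"
proof (rule ccontr)
  assume nz: "\<not> ?thesis"
  define \<psi> where "\<psi> = (\<lambda>g. \<lambda>h\<in>carrier G. g \<otimes> h \<otimes> inv g)"
  interpret A: group_action G "carrier G" \<psi> unfolding \<psi>_def by (rule action_by_conjugation)
  define Orbs where "Orbs = orbits G (carrier G) \<psi>"
  have s1: "(\<Sum>B\<in>Orbs. card B) = (\<Sum>B\<in>Orbs. \<Sum>x\<in>B. (1::nat))" by simp
  have s2: "(\<Sum>B\<in>Orbs. \<Sum>x\<in>B. (1::nat)) = (\<Sum>x\<in>carrier G. 1)"
    unfolding Orbs_def by (rule A.disjoint_sum[OF fin])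
  have sum: "(\<Sum>B\<in>Orbs. card B) = p^n" using s1 s2 card by simp
  have cov: "\<Union>Orbs = carrier G" unfolding Orbs_def by (rule A.orbits_coverture)
  have sub: "Orbs \<subseteq> Pow (carrier G)"
  proof
    fix B assume "B \<in> Orbs"
    then have "B \<subseteq> \<Union>Orbs" by (rule Union_upper)
    then show "B \<in> Pow (carrier G)" using cov by simp
  qed
  have finO: "finite Orbs" using finite_subset[OF sub] fin by simp
  have orb1: "orbit G \<psi> \<one> = {\<one>}"
    unfolding orbit_def \<psi>_def using one_closed by (auto intro!: exI[of _ "\<one>"])
  have one: "{\<one>} \<in> Orbs" unfolding Orbs_def orbits_def using orb1[symmetric] by blast
  have dv: "p dvd card B" if B: "B \<in> Orbs - {{\<one>}}" for B
  proof -
    obtain x where x: "x \<in> carrier G" "B = orbit G \<psi> x"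
      using B unfolding Orbs_def orbits_def by blast
    have "p^n = card B * card (stabilizer G \<psi> x)"
      using A.orbit_stabilizer_theorem[OF x(1)] x card unfolding order_def by simp
    then have "card B dvd p^n" by (rule dvdI)
    then obtain i where i: "card B = p^i" using primepow_dvd[OF p] by blast
    show ?thesis
    proof (cases i)
      case 0
      then have c1: "card B = 1" using i by simp
      have xO: "x \<in> B" using A.orbit_refl[OF x(1)] x by simp
      obtain y where "B = {y}" using card_1_singletonE[OF c1] by blast
      then have Ox: "B = {x}" using xO by simp
      have "\<forall>g\<in>carrier G. g \<otimes> x = x \<otimes> g"
      proof
        fix g assume g: "g \<in> carrier G"
        have "\<psi> g x \<in> B" unfolding x(2) orbit_def using g by blast
        then have "g \<otimes> x \<otimes> inv g = x" using Ox x(1) unfolding \<psi>_def by simp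
        then show "g \<otimes> x = x \<otimes> g" using comm_conj g x(1) by blast
      qed
      then have "x = \<one>" using nz x(1) by blast
      then show ?thesis using B Ox by simp
    next
      case (Suc j)
      then show ?thesis using i by simp
    qed
  qed
  have "(\<Sum>B\<in>Orbs. card B) = card {\<one>} + (\<Sum>B\<in>Orbs - {{\<one>}}. card B)"
    using sum.remove[OF finO one, of card] by simp
  define T where "T = (\<Sum>B\<in>Orbs - {{\<one>}}. card B)"
  have e: "p^n = 1 + T" using sum \<open>(\<Sum>B\<in>Orbs. card B) = card {\<one>} + (\<Sum>B\<in>Orbs - {{\<one>}}. card B)\<close> unfolding T_def by simp
  have d2: "p dvd T" unfolding T_def by (rule dvd_sum) (use dv in blast)
  have "p dvd p^n" using n by (simp add: dvd_power)
  then have d1: "p dvd 1 + T" using e by simp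
  have "p dvd (1 + T) - T" by (rule dvd_diff_nat[OF d1 d2])
  then have "p dvd 1" by simp
  then show False using p by simp
qed

end


context group begin

lemma count_S:
  assumes fin: "finite (carrier G)" and p: "Factorial_Ring.prime (p::nat)"
    and ex: "\<forall>x\<in>carrier G. x [^] p = \<one>" and card: "card (carrier G) = p^n"
  shows "card {H. subgroup H G \<and> card H = p} = (\<Sum>i<n. p^i)"
proof -
  define S where "S = {H. subgroup H G \<and> card H = p}"
  have finS: "finite S"
    using fin unfolding S_def by (rule rev_finite_subset[OF finite_Pow_iff[THEN iffD2]]) (auto dest: subgroup.subset)
  define C where "C = (\<lambda>H. H - {\<one>}) ` S"
  have inj: "inj_on (\<lambda>H. H - {\<one>}) S"
  proof (rule inj_onI)
    fix H1 H2 assume "H1 \<in> S" "H2 \<in> S" "H1 - {\<one>} = H2 - {\<one>}"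
    then have "insert \<one> (H1 - {\<one>}) = insert \<one> (H2 - {\<one>})" by simp
    moreover have "\<one> \<in> H1" "\<one> \<in> H2" using \<open>H1 \<in> S\<close> \<open>H2 \<in> S\<close> unfolding S_def by (auto intro: subgroup.one_closed)
    ultimately show "H1 = H2" by (simp add: insert_absorb)
  qed
  have U: "\<Union>C = carrier G - {\<one>}"
  proof
    show "\<Union>C \<subseteq> carrier G - {\<one>}" unfolding C_def S_def by (auto dest: subgroup.subset)
  next
    show "carrier G - {\<one>} \<subseteq> \<Union>C"
    proof
      fix x assume x: "x \<in> carrier G - {\<one>}"
      then have "generate G {x} \<in> S" unfolding S_def
        using generate_is_subgroup[of "{x}"] card_gen_p[OF p ex] by auto
      moreover have "x \<in> generate G {x} - {\<one>}" using x generate.incl[of x "{x}" G] by blast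
      ultimately show "x \<in> \<Union>C" unfolding C_def by blast
    qed
  qed
  have cards: "\<forall>c\<in>C. card c = p - 1"
  proof
    fix c assume "c \<in> C"
    then obtain H where H: "H \<in> S" "c = H - {\<one>}" unfolding C_def by blast
    then show "card c = p - 1" unfolding S_def by (simp add: subgroup.one_closed)
  qed
  have disj: "\<forall>c1\<in>C. \<forall>c2\<in>C. c1 \<noteq> c2 \<longrightarrow> c1 \<inter> c2 = {}"
  proof (intro ballI impI)
    fix c1 c2 assume c: "c1 \<in> C" "c2 \<in> C" "c1 \<noteq> c2"
    obtain H1 where H1: "H1 \<in> S" "c1 = H1 - {\<one>}" using c unfolding C_def by blast
    obtain H2 where H2: "H2 \<in> S" "c2 = H2 - {\<one>}" using c unfolding C_def by blast
    show "c1 \<inter> c2 = {}"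
    proof (rule ccontr)
      assume "c1 \<inter> c2 \<noteq> {}"
      then obtain x where x: "x \<in> H1" "x \<in> H2" "x \<noteq> \<one>" using H1 H2 by blast
      have "H1 = generate G {x}" using gen_eq[OF fin p ex _ _ x(1) x(3)] H1 unfolding S_def by simp
      moreover have "H2 = generate G {x}" using gen_eq[OF fin p ex _ _ x(2) x(3)] H2 unfolding S_def by simp
      ultimately show False using c H1 H2 by simp
    qed
  qed
  have finC: "finite C" unfolding C_def using finS by simp
  have finU: "finite (\<Union>C)" using U fin by simp
  have "(p - 1) * card C = card (\<Union>C)" using card_partition[OF finC finU, of "p - 1"] cards disj by blast
  also have "\<dots> = p^n - 1" using U card fin by (simp add: card_Diff_singleton)
  finally have "(p - 1) * card S = p^n - 1" using card_image[OF inj] unfolding C_def by simp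
  also have "\<dots> = (p - 1) * (\<Sum>i<n. p^i)" using geom by simp
  finally have "card S = (\<Sum>i<n. p^i)" using prime_gt_1_nat[OF p] by simp
  then show ?thesis unfolding S_def .
qed

lemma orbit_size:
  assumes fin: "finite (carrier G)" and p: "Factorial_Ring.prime (p::nat)"
    and ex: "\<forall>x\<in>carrier G. x [^] p = \<one>" and card: "card (carrier G) = p^n"
    and n: "n \<ge> 2" and H: "subgroup H G" "card H = p"
  shows "\<exists>e\<le>n-2. card (orbit G (\<lambda>g. \<lambda>H\<in>{H. subgroup H G}. (g <# H) #> inv g) H) = p^e"
proof -
  define \<phi> where "\<phi> = (\<lambda>g. \<lambda>H\<in>{H. subgroup H G}. (g <# H) #> inv g)"
  interpret A: group_action G "{H. subgroup H G}" \<phi> unfolding \<phi>_def by (rule conj_action)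
  have p1: "p > 1" using prime_gt_1_nat[OF p] .
  obtain z where z: "z \<in> carrier G" "z \<noteq> \<one>" "\<forall>g\<in>carrier G. g \<otimes> z = z \<otimes> g"
    using center_nontriv[OF fin p card] n by auto
  have HE: "H \<in> {H. subgroup H G}" using H by simp
  have Hc: "H \<subseteq> carrier G" using subgroup.subset[OF H(1)] .
  have finH: "finite H" using finite_subset[OF Hc fin] .
  define St where "St = stabilizer G \<phi> H"
  have phiH: "\<phi> g H = (g <# H) #> inv g" for g unfolding \<phi>_def using HE by simp
  have HSt: "H \<subseteq> St"
  proof
    fix h assume h: "h \<in> H"
    have hc: "h \<in> carrier G" using h Hc by blast
    have "h <# H = H" using coset_join3[OF hc H(1) h] .
    moreover have "H #> inv h = H" using coset_join2[OF inv_closed[OF hc] H(1) subgroup.m_inv_closed[OF H(1) h]] .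
    ultimately show "h \<in> St" unfolding St_def stabilizer_def using hc phiH by simp
  qed
  have "\<exists>y\<in>St. y \<notin> H"
  proof (cases "z \<in> H")
    case False
    have "(\<lambda>h. z \<otimes> h \<otimes> inv z) ` H = H"
    proof -
      have "z \<otimes> h \<otimes> inv z = h" if h: "h \<in> H" for h
      proof -
        have hc: "h \<in> carrier G" using h Hc by blast
        have "z \<otimes> h \<otimes> inv z = h \<otimes> z \<otimes> inv z" using z(3) hc by simp
        also have "\<dots> = h" using hc z(1) by (simp add: m_assoc)
        finally show ?thesis .
      qed
      then show ?thesis by simp
    qed
    then have "\<phi> z H = H" using phiH conj_image(1)[OF z(1) Hc] by simp
    then have "z \<in> St" unfolding St_def stabilizer_def using z(1) by simp
    then show ?thesis using False by blast
  next
    case True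
    have "card H < card (carrier G)"
    proof -
      have "p^1 < p^n" using p1 n by (intro power_strict_increasing) auto
      then show ?thesis using H card by simp
    qed
    then have "\<not> carrier G \<subseteq> H" using card_mono[OF finH, of "carrier G"] by linarith
    then obtain y where y: "y \<in> carrier G" "y \<notin> H" by blast
    define K where "K = \<phi> y H"
    have KE: "subgroup K G" using A.element_image[OF y(1) HE] unfolding K_def by blast
    have cK: "card K = p" unfolding K_def phiH using conj_card[OF y(1) Hc] H by simp
    have yz: "z = y \<otimes> z \<otimes> inv y" using z(3) y(1) z(1) by (simp add: m_assoc)
    have "z \<in> (\<lambda>h. y \<otimes> h \<otimes> inv y) ` H" using yz True by (rule image_eqI)
    then have "z \<in> K" unfolding K_def phiH conj_image(1)[OF y(1) Hc] .
    then have "K = H" using gen_eq[OF fin p ex KE cK _ z(2)] gen_eq[OF fin p ex H True z(2)] by simp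
    then have "y \<in> St" unfolding St_def stabilizer_def K_def using y(1) by simp
    then show ?thesis using y by blast
  qed
  then have HpSt: "H \<subset> St" using HSt by blast
  have Stsub: "subgroup St G" unfolding St_def using A.stabilizer_subgroup[OF HE] .
  have finSt: "finite St" using finite_subset[OF subgroup.subset[OF Stsub] fin] .
  have cSt: "card St > p" using psubset_card_mono[OF finSt HpSt] H by simp
  have os: "p^n = card (orbit G \<phi> H) * card St"
    using A.orbit_stabilizer_theorem[OF HE] card unfolding St_def order_def by simp
  then have "card St dvd p^n" by (simp add: dvd_triv_right)
  then obtain i where i: "card St = p^i" using primepow_dvd[OF p] by blast
  have "card (orbit G \<phi> H) dvd p^n" using os by (rule dvdI)
  then obtain j where j: "card (orbit G \<phi> H) = p^j" using primepow_dvd[OF p] by blast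
  have "i \<ge> 2"
  proof (rule ccontr)
    assume "\<not> i \<ge> 2"
    then have "i \<le> 1" by simp
    then have "p^i \<le> p^1" using p1 by (intro power_increasing) auto
    then show False using cSt i by simp
  qed
  moreover have "p^n = p^(j+i)" using os i j by (simp add: power_add)
  then have "n = j + i" using p1 by simp
  ultimately have "j \<le> n - 2" by simp
  then show ?thesis using j unfolding \<phi>_def by blast
qed

end

theorem corollary4p5:
  fixes G (structure) and p n :: nat
  assumes "group G"
    and "Factorial_Ring.prime p"
    and "n \<ge> 2"
    and "order G = p ^ n"
    and "\<forall>x \<in> carrier G. x [^] p = \<one>"
  shows "eta G \<ge> n + p - 1"
proof -
  interpret group G by fact
  note p = assms(2) and ex = assms(5) and n = assms(3)
  have p1: "p > 1" using prime_gt_1_nat[OF p] .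
  have card: "card (carrier G) = p^n" using assms(4) unfolding order_def .
  have "order G > 0" using assms(4) p1 by simp
  then have fin: "finite (carrier G)" using order_gt_0_iff_finite by blast
  have nt: "\<exists>x\<in>carrier G. x \<noteq> \<one>"
  proof (rule ccontr)
    assume "\<not> ?thesis"
    then have "carrier G \<subseteq> {\<one>}" by blast
    then have "card (carrier G) \<le> 1" using card_mono[of "{\<one>}"] by simp
    moreover have "p^1 < p^n" using p1 n by (intro power_strict_increasing) auto
    ultimately show False using card p1 by simp
  qed
  define \<phi> where "\<phi> = (\<lambda>g. \<lambda>H\<in>{H. subgroup H G}. (g <# H) #> inv g)"
  interpret A: group_action G "{H. subgroup H G}" \<phi> unfolding \<phi>_def by (rule conj_action)
  define S where "S = {H. subgroup H G \<and> card H = p}"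
  have SM: "{C. maximal_cyclic_subgroup G C} = S" unfolding S_def using maxcyc_iff[OF fin p ex nt] by blast
  have cls: "subgroup_conj_class G H = orbit G \<phi> H" if "H \<in> S" for H
    using that unfolding subgroup_conj_class_def orbit_def \<phi>_def S_def by auto
  define I where "I = orbit G \<phi> ` S"
  have "subgroup_conj_class G ` S = orbit G \<phi> ` S" by (rule image_cong[OF refl cls])
  then have eta: "eta G = card I" unfolding eta_def SM I_def by simp
  have finS: "finite S"
    using fin unfolding S_def by (rule rev_finite_subset[OF finite_Pow_iff[THEN iffD2]]) (auto dest: subgroup.subset)
  have orbS: "orbit G \<phi> H \<subseteq> S" if H: "H \<in> S" for H
  proof
    fix K assume "K \<in> orbit G \<phi> H"
    then obtain g where g: "g \<in> carrier G" "K = \<phi> g H" unfolding orbit_def by blast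
    have HE: "H \<in> {H. subgroup H G}" using H unfolding S_def by simp
    have "subgroup K G" using A.element_image[OF g(1) HE] g by blast
    moreover have "card K = p" using g HE H conj_card[OF g(1)] subgroup.subset unfolding \<phi>_def S_def by auto
    ultimately show "K \<in> S" unfolding S_def by simp
  qed
  have UI: "\<Union>I = S"
  proof
    show "\<Union>I \<subseteq> S" unfolding I_def using orbS by blast
    show "S \<subseteq> \<Union>I" unfolding I_def using A.orbit_refl unfolding S_def by blast
  qed
  have pw: "pairwise disjnt I"
    unfolding pairwise_def disjnt_def I_def
  proof (clarify)
    fix H1 H2 assume H: "H1 \<in> S" "H2 \<in> S" "orbit G \<phi> H1 \<noteq> orbit G \<phi> H2"
    have "orbit G \<phi> H1 \<in> orbits G {H. subgroup H G} \<phi>" "orbit G \<phi> H2 \<in> orbits G {H. subgroup H G} \<phi>"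
      using H unfolding orbits_def S_def by auto
    then show "orbit G \<phi> H1 \<inter> orbit G \<phi> H2 = {}" using A.disjoint_union H(3) by blast
  qed
  have finI: "finite B" if "B \<in> I" for B
  proof -
    have "B \<subseteq> S" using Union_upper[OF that] UI by simp
    then show ?thesis using finite_subset finS by blast
  qed
  have cS: "card S = sum card I" using card_Union_disjoint[OF pw finI] UI by simp
  have sizes: "\<forall>B\<in>I. \<exists>e\<le>n-2. card B = p^e"
    using orbit_size[OF fin p ex card n] unfolding I_def S_def \<phi>_def by auto
  have finI': "finite I" unfolding I_def using finS by simp
  have "dsum p (n-2) (sum card I) \<le> card I"
    using dsum_count[of p I "n-2" card] p1 finI' sizes by simp
  moreover have "sum card I = (\<Sum>i<n. p^i)"
    using cS count_S[OF fin p ex card] unfolding S_def by simp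
  moreover have "dsum p (n-2) (\<Sum>i<n. p^i) = (n-2) + p + 1"
  proof -
    have nn: "n - 2 + 2 = n" using n by simp
    show ?thesis using dsum_geom[of p "n-2"] p1 unfolding nn by simp
  qed
  ultimately show ?thesis using eta n by simp
qed

end
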